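(* Let $\alpha\in(0,\frac\pi2)$ and $C_\alpha=(\alpha/\pi)^2+(1-\alpha/\pi)^2$. Let $N^v,N^b\in\{0,1,2,\dots\}$, and let $\{n^0_j\}_{j=1}^{N^v}$, $\{n^+_i,n^-_i\}_{i=1}^{N^b}$ be integers with $\sum_{i=1}^{N^b}(n^+_i+n^-_i)+\sum_{j=1}^{N^v}n^0_j=D$. Then $$\sum_{j=1}^{N^v}(n^0_j)^2+\sum_{i=1}^{N^b}\Big[\Big(n^-_i+\frac\alpha\pi\Big)^2+\Big(n^+_i-\frac\alpha\pi\Big)^2\Big]\ge|D|\,C_\alpha.$$ Furthermore, if $D>0$, equality holds if and only if $n^0_j=0$ for all $j$, $N^b=D$, and $n^+_i=1$, $n^-_i=0$ for $i=1,\dots,D$; while if $D<0$, equality holds if and only if $n^0_j=0$ for all $j$, $N^b=|D|$, and $n^+_i=0$, $n^-_i=-1$ for all $i$. *)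

theory Defs
  imports Complex_Main
begin

definition C_alpha :: "real \<Rightarrow> real" where
  "C_alpha \<alpha> = (\<alpha> / pi)\<^sup>2 + (1 - \<alpha> / pi)\<^sup>2"

end

theory Submission
  imports Defs
begin

lemma sq_ge:
  fixes n :: int and C :: real
  assumes "C < 1" "0 \<le> C"
  shows "(real_of_int n)\<^sup>2 \<ge> \<bar>real_of_int n\<bar> * C"
    and "(real_of_int n)\<^sup>2 = \<bar>real_of_int n\<bar> * C \<Longrightarrow> n = 0"
proof -
  have A: "(real_of_int n)\<^sup>2 > \<bar>real_of_int n\<bar> * C" if "n \<noteq> 0"
  proof -
    have "\<bar>real_of_int n\<bar> \<ge> 1" using that by linarith
    hence "\<bar>real_of_int n\<bar> * C < \<bar>real_of_int n\<bar> * 1" using assms by (intro mult_strict_left_mono) auto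
    also have "\<dots> \<le> \<bar>real_of_int n\<bar> * \<bar>real_of_int n\<bar>"
      using \<open>\<bar>real_of_int n\<bar> \<ge> 1\<close> by (intro mult_left_mono) auto
    also have "\<dots> = (real_of_int n)\<^sup>2" by (simp add: power2_eq_square abs_mult_self_eq)
    finally show ?thesis .
  qed
  show "(real_of_int n)\<^sup>2 \<ge> \<bar>real_of_int n\<bar> * C" using A by (cases "n = 0") force+
  show "(real_of_int n)\<^sup>2 = \<bar>real_of_int n\<bar> * C \<Longrightarrow> n = 0" using A by force
qed

lemma pair:
  fixes m p :: int and a :: real
  assumes a0: "0 < a" and a1: "a < 1/2"
  defines "C \<equiv> a\<^sup>2 + (1 - a)\<^sup>2"
  shows "(real_of_int m + a)\<^sup>2 + (real_of_int p - a)\<^sup>2 \<ge> \<bar>real_of_int (m + p)\<bar> * C"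
    and "(real_of_int m + a)\<^sup>2 + (real_of_int p - a)\<^sup>2 = \<bar>real_of_int (m + p)\<bar> * C
         \<Longrightarrow> (p = 1 \<and> m = 0) \<or> (p = 0 \<and> m = -1)"
proof -
  define s where "s = m + p"
  define x where "x = real_of_int m + a"
  define y where "y = real_of_int p - a"
  have xy: "x + y = real_of_int s" by (simp add: x_def y_def s_def)
  have C1: "C < 1" unfolding C_def using a0 a1 by (simp add: power2_eq_square algebra_simps)
  have C0: "0 < C" unfolding C_def using a0 by (simp add: add_pos_nonneg)
  have P: "x\<^sup>2 + y\<^sup>2 > \<bar>real_of_int s\<bar> * C \<or> (p = 1 \<and> m = 0 \<and> x\<^sup>2 + y\<^sup>2 = \<bar>real_of_int s\<bar> * C)
     \<or> (p = 0 \<and> m = -1 \<and> x\<^sup>2 + y\<^sup>2 = \<bar>real_of_int s\<bar> * C)"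
  proof -
    consider "s = 0" | "s = 1" | "s = -1" | "s \<ge> 2" | "s \<le> -2" by linarith
    then show ?thesis
    proof cases
      case 1
      have "x \<noteq> 0"
      proof
        assume "x = 0"
        hence "real_of_int m = - a" by (simp add: x_def)
        moreover have "real_of_int m \<ge> 0 \<or> real_of_int m \<le> -1"
        proof (cases "m \<ge> 0")
          case True thus ?thesis by simp
        next
          case False hence "m \<le> -1" by simp
          hence "real_of_int m \<le> real_of_int (-1)" by (simp only: of_int_le_iff)
          thus ?thesis by simp
        qed
        ultimately show False using a0 a1 by linarith
      qed
      hence "x\<^sup>2 > 0" by simp
      thus ?thesis using 1 by (simp add: add_pos_nonneg)
    next
      case 2
      hence pm: "real_of_int p = 1 - real_of_int m" using s_def by linarith
      have e: "x\<^sup>2 + y\<^sup>2 - \<bar>real_of_int s\<bar> * C = 2 * real_of_int m * (real_of_int m + 2*a - 1)"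
        unfolding x_def y_def pm using 2 by (simp add: C_def power2_eq_square algebra_simps)
      consider "m = 0" | "m \<ge> 1" | "m \<le> -1" by linarith
      then show ?thesis
      proof cases
        case 1 thus ?thesis using e pm by simp
      next
        case 2
        hence "2 * real_of_int m * (real_of_int m + 2*a - 1) > 0" using a0 by (intro mult_pos_pos) auto
        thus ?thesis using e by linarith
      next
        case 3
        hence "2 * real_of_int m * (real_of_int m + 2*a - 1) > 0" using a1 by (intro mult_neg_neg) auto
        thus ?thesis using e by linarith
      qed
    next
      case 3
      hence pm: "real_of_int m = -1 - real_of_int p" using s_def by linarith
      have e: "x\<^sup>2 + y\<^sup>2 - \<bar>real_of_int s\<bar> * C = 2 * real_of_int p * (real_of_int p - 2*a + 1)"
        unfolding x_def y_def pm using 3 by (simp add: C_def power2_eq_square algebra_simps)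
      consider "p = 0" | "p \<ge> 1" | "p \<le> -1" by linarith
      then show ?thesis
      proof cases
        case 1 thus ?thesis using e pm by simp
      next
        case 2
        hence "2 * real_of_int p * (real_of_int p - 2*a + 1) > 0" using a1 by (intro mult_pos_pos) auto
        thus ?thesis using e by linarith
      next
        case 3
        hence "2 * real_of_int p * (real_of_int p - 2*a + 1) > 0" using a0 by (intro mult_neg_neg) auto
        thus ?thesis using e by linarith
      qed
    next
      case 4
      have id: "(x+y)\<^sup>2 + (x-y)\<^sup>2 = 2*(x\<^sup>2+y\<^sup>2)" by (simp add: power2_eq_square algebra_simps)
      have hs: "real_of_int s \<ge> 2" using 4 by simp
      have "real_of_int s * 2 \<le> real_of_int s * real_of_int s" using hs by (intro mult_left_mono) auto
      moreover have "real_of_int s > \<bar>real_of_int s\<bar> * C" using hs C1 C0 by simp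
      moreover have "(x+y)*(x+y) = real_of_int s * real_of_int s" using xy by simp
      ultimately have "\<bar>real_of_int s\<bar> * C < x\<^sup>2 + y\<^sup>2" using id zero_le_power2[of "x-y"] unfolding power2_eq_square by (smt (verit))
      thus ?thesis by blast
    next
      case 5
      have id: "(x+y)\<^sup>2 + (x-y)\<^sup>2 = 2*(x\<^sup>2+y\<^sup>2)" by (simp add: power2_eq_square algebra_simps)
      have hs: "real_of_int s \<le> -2" using 5 by simp
      have "(- real_of_int s) * 2 \<le> (- real_of_int s) * (- real_of_int s)" using hs by (intro mult_left_mono) auto
      hence "(- real_of_int s) * 2 \<le> real_of_int s * real_of_int s" by simp
      moreover have "- real_of_int s > \<bar>real_of_int s\<bar> * C" using hs C1 C0 by simp
      moreover have "(x+y)*(x+y) = real_of_int s * real_of_int s" using xy by simp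
      ultimately have "\<bar>real_of_int s\<bar> * C < x\<^sup>2 + y\<^sup>2" using id zero_le_power2[of "x-y"] unfolding power2_eq_square by (smt (verit))
      thus ?thesis by blast
    qed
  qed
  show "(real_of_int m + a)\<^sup>2 + (real_of_int p - a)\<^sup>2 \<ge> \<bar>real_of_int (m + p)\<bar> * C"
    using P unfolding x_def y_def s_def by linarith
  show "(real_of_int m + a)\<^sup>2 + (real_of_int p - a)\<^sup>2 = \<bar>real_of_int (m + p)\<bar> * C
         \<Longrightarrow> (p = 1 \<and> m = 0) \<or> (p = 0 \<and> m = -1)"
    using P unfolding x_def y_def s_def by linarith
qed

theorem lemma6p2:
  fixes \<alpha> :: real and Nv Nb :: nat and n0 np nm :: "nat \<Rightarrow> int" and D :: int
  assumes "0 < \<alpha>" and "\<alpha> < pi / 2"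
    and "(\<Sum>i=1..Nb. np i + nm i) + (\<Sum>j=1..Nv. n0 j) = D"
  shows "(\<Sum>j=1..Nv. (real_of_int (n0 j))\<^sup>2)
           + (\<Sum>i=1..Nb. (real_of_int (nm i) + \<alpha> / pi)\<^sup>2 + (real_of_int (np i) - \<alpha> / pi)\<^sup>2)
         \<ge> real_of_int \<bar>D\<bar> * C_alpha \<alpha>
         \<and> (D > 0 \<longrightarrow>
         ((\<Sum>j=1..Nv. (real_of_int (n0 j))\<^sup>2)
           + (\<Sum>i=1..Nb. (real_of_int (nm i) + \<alpha> / pi)\<^sup>2 + (real_of_int (np i) - \<alpha> / pi)\<^sup>2)
           = real_of_int \<bar>D\<bar> * C_alpha \<alpha>
          \<longleftrightarrow> (\<forall>j\<in>{1..Nv}. n0 j = 0) \<and> int Nb = D \<and> (\<forall>i\<in>{1..Nb}. np i = 1 \<and> nm i = 0)))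
         \<and> (D < 0 \<longrightarrow>
         ((\<Sum>j=1..Nv. (real_of_int (n0 j))\<^sup>2)
           + (\<Sum>i=1..Nb. (real_of_int (nm i) + \<alpha> / pi)\<^sup>2 + (real_of_int (np i) - \<alpha> / pi)\<^sup>2)
           = real_of_int \<bar>D\<bar> * C_alpha \<alpha>
          \<longleftrightarrow> (\<forall>j\<in>{1..Nv}. n0 j = 0) \<and> int Nb = \<bar>D\<bar> \<and> (\<forall>i\<in>{1..Nb}. np i = 0 \<and> nm i = -1)))"
proof -
  define a where "a = \<alpha> / pi"
  have a0: "0 < a" using assms(1) by (simp add: a_def)
  have a1: "a < 1/2" using assms(2) by (simp add: a_def divide_less_eq)
  define C where "C = a\<^sup>2 + (1 - a)\<^sup>2"
  have CC: "C_alpha \<alpha> = C" by (simp add: C_def C_alpha_def a_def)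
  have C1: "C < 1" unfolding C_def using a0 a1 by (simp add: power2_eq_square algebra_simps)
  have C0: "0 < C" unfolding C_def using a0 by (simp add: add_pos_nonneg)
  define f where "f i = (real_of_int (nm i) + a)\<^sup>2 + (real_of_int (np i) - a)\<^sup>2" for i
  define s where "s i = nm i + np i" for i
  define L where "L = (\<Sum>j=1..Nv. (real_of_int (n0 j))\<^sup>2) + (\<Sum>i=1..Nb. f i)"
  have Leq: "(\<Sum>j=1..Nv. (real_of_int (n0 j))\<^sup>2)
           + (\<Sum>i=1..Nb. (real_of_int (nm i) + \<alpha> / pi)\<^sup>2 + (real_of_int (np i) - \<alpha> / pi)\<^sup>2) = L"
    by (simp add: L_def f_def a_def)
  have hD: "(\<Sum>i=1..Nb. s i) + (\<Sum>j=1..Nv. n0 j) = D" using assms(3) by (simp add: s_def add.commute)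
  have fge: "f i \<ge> \<bar>real_of_int (s i)\<bar> * C" for i
    unfolding f_def s_def C_def using pair(1)[OF a0 a1] by blast
  have feq: "f i = \<bar>real_of_int (s i)\<bar> * C \<Longrightarrow> (np i = 1 \<and> nm i = 0) \<or> (np i = 0 \<and> nm i = -1)" for i
    unfolding f_def s_def C_def using pair(2)[OF a0 a1] by blast
  have gge: "(real_of_int (n0 j))\<^sup>2 \<ge> \<bar>real_of_int (n0 j)\<bar> * C" for j
    using sq_ge(1)[OF C1 less_imp_le[OF C0]] by blast
  have geq: "(real_of_int (n0 j))\<^sup>2 = \<bar>real_of_int (n0 j)\<bar> * C \<Longrightarrow> n0 j = 0" for j
    using sq_ge(2)[OF C1 less_imp_le[OF C0]] by blast
  define G where "G = (\<Sum>j=1..Nv. (real_of_int (n0 j))\<^sup>2 - \<bar>real_of_int (n0 j)\<bar> * C)"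
  define F where "F = (\<Sum>i=1..Nb. f i - \<bar>real_of_int (s i)\<bar> * C)"
  define T where "T = (\<Sum>j=1..Nv. \<bar>n0 j\<bar>) + (\<Sum>i=1..Nb. \<bar>s i\<bar>) - \<bar>D\<bar>"
  have key: "L - real_of_int \<bar>D\<bar> * C = G + F + C * real_of_int T"
    by (simp add: L_def G_def F_def T_def sum_subtractf sum_distrib_left sum_distrib_right algebra_simps)
  have G0: "G \<ge> 0" unfolding G_def using gge by (intro sum_nonneg) auto
  have F0: "F \<ge> 0" unfolding F_def using fge by (intro sum_nonneg) auto
  have T0: "T \<ge> 0"
  proof -
    have "\<bar>D\<bar> \<le> \<bar>\<Sum>i=1..Nb. s i\<bar> + \<bar>\<Sum>j=1..Nv. n0 j\<bar>" using hD abs_triangle_ineq by blast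
    also have "\<dots> \<le> (\<Sum>i=1..Nb. \<bar>s i\<bar>) + (\<Sum>j=1..Nv. \<bar>n0 j\<bar>)"
      by (intro add_mono sum_abs)
    finally show ?thesis unfolding T_def by simp
  qed
  have CT: "C * real_of_int T \<ge> 0" using C0 T0 by simp
  have ineq: "L \<ge> real_of_int \<bar>D\<bar> * C" using key G0 F0 CT by linarith
  have eqcase: "(\<forall>j\<in>{1..Nv}. n0 j = 0) \<and> (\<forall>i\<in>{1..Nb}. (np i = 1 \<and> nm i = 0) \<or> (np i = 0 \<and> nm i = -1))
       \<and> T = 0" if "L = real_of_int \<bar>D\<bar> * C"
  proof -
    have "G + F + C * real_of_int T = 0" using key that by simp
    hence z: "G = 0" "F = 0" "C * real_of_int T = 0" using G0 F0 CT by linarith+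
    have "\<forall>j\<in>{1..Nv}. (real_of_int (n0 j))\<^sup>2 - \<bar>real_of_int (n0 j)\<bar> * C = 0"
      using z(1) unfolding G_def using gge by (subst (asm) sum_nonneg_eq_0_iff) auto
    hence A: "\<forall>j\<in>{1..Nv}. n0 j = 0" using geq by auto
    have "\<forall>i\<in>{1..Nb}. f i - \<bar>real_of_int (s i)\<bar> * C = 0"
      using z(2) unfolding F_def using fge by (subst (asm) sum_nonneg_eq_0_iff) auto
    hence B: "\<forall>i\<in>{1..Nb}. (np i = 1 \<and> nm i = 0) \<or> (np i = 0 \<and> nm i = -1)" using feq by auto
    have "T = 0" using z(3) C0 by simp
    thus ?thesis using A B by blast
  qed
  have Dpos: "L = real_of_int \<bar>D\<bar> * C \<longleftrightarrow> (\<forall>j\<in>{1..Nv}. n0 j = 0) \<and> int Nb = D \<and> (\<forall>i\<in>{1..Nb}. np i = 1 \<and> nm i = 0)"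
    if "D > 0"
  proof
    assume "L = real_of_int \<bar>D\<bar> * C"
    from eqcase[OF this] have A: "\<forall>j\<in>{1..Nv}. n0 j = 0"
      and B: "\<forall>i\<in>{1..Nb}. (np i = 1 \<and> nm i = 0) \<or> (np i = 0 \<and> nm i = -1)" and T: "T = 0" by auto
    have s0: "(\<Sum>j=1..Nv. n0 j) = 0" "(\<Sum>j=1..Nv. \<bar>n0 j\<bar>) = 0" using A by simp_all
    have "(\<Sum>i=1..Nb. \<bar>s i\<bar> - s i) = 0" using T s0 hD that by (simp add: T_def sum_subtractf)
    hence "\<forall>i\<in>{1..Nb}. \<bar>s i\<bar> - s i = 0" by (subst (asm) sum_nonneg_eq_0_iff) auto
    hence C: "\<forall>i\<in>{1..Nb}. np i = 1 \<and> nm i = 0" using B by (force simp: s_def)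
    have "(\<Sum>i=1..Nb. s i) = (\<Sum>i=1..Nb. 1)" using C by (intro sum.cong) (auto simp: s_def)
    hence "int Nb = D" using hD s0 by simp
    thus "(\<forall>j\<in>{1..Nv}. n0 j = 0) \<and> int Nb = D \<and> (\<forall>i\<in>{1..Nb}. np i = 1 \<and> nm i = 0)" using A C by blast
  next
    assume H: "(\<forall>j\<in>{1..Nv}. n0 j = 0) \<and> int Nb = D \<and> (\<forall>i\<in>{1..Nb}. np i = 1 \<and> nm i = 0)"
    have "(\<Sum>i=1..Nb. f i) = (\<Sum>i=1..Nb. C)" using H by (intro sum.cong) (auto simp: f_def C_def power2_commute)
    thus "L = real_of_int \<bar>D\<bar> * C" using H that by (simp add: L_def)
  qed
  have Dneg: "L = real_of_int \<bar>D\<bar> * C \<longleftrightarrow> (\<forall>j\<in>{1..Nv}. n0 j = 0) \<and> int Nb = \<bar>D\<bar> \<and> (\<forall>i\<in>{1..Nb}. np i = 0 \<and> nm i = -1)"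
    if "D < 0"
  proof
    assume "L = real_of_int \<bar>D\<bar> * C"
    from eqcase[OF this] have A: "\<forall>j\<in>{1..Nv}. n0 j = 0"
      and B: "\<forall>i\<in>{1..Nb}. (np i = 1 \<and> nm i = 0) \<or> (np i = 0 \<and> nm i = -1)" and T: "T = 0" by auto
    have s0: "(\<Sum>j=1..Nv. n0 j) = 0" "(\<Sum>j=1..Nv. \<bar>n0 j\<bar>) = 0" using A by simp_all
    have "(\<Sum>i=1..Nb. \<bar>s i\<bar> + s i) = 0" using T s0 hD that by (simp add: T_def sum.distrib)
    hence "\<forall>i\<in>{1..Nb}. \<bar>s i\<bar> + s i = 0" by (subst (asm) sum_nonneg_eq_0_iff) auto
    hence C: "\<forall>i\<in>{1..Nb}. np i = 0 \<and> nm i = -1" using B by (force simp: s_def)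
    have "(\<Sum>i=1..Nb. s i) = (\<Sum>i=1..Nb. -1)" using C by (intro sum.cong) (auto simp: s_def)
    hence "int Nb = \<bar>D\<bar>" using hD s0 that by simp
    thus "(\<forall>j\<in>{1..Nv}. n0 j = 0) \<and> int Nb = \<bar>D\<bar> \<and> (\<forall>i\<in>{1..Nb}. np i = 0 \<and> nm i = -1)" using A C by blast
  next
    assume H: "(\<forall>j\<in>{1..Nv}. n0 j = 0) \<and> int Nb = \<bar>D\<bar> \<and> (\<forall>i\<in>{1..Nb}. np i = 0 \<and> nm i = -1)"
    have "(\<Sum>i=1..Nb. f i) = (\<Sum>i=1..Nb. C)" using H by (intro sum.cong) (auto simp: f_def C_def power2_commute)
    moreover have "real Nb = real_of_int \<bar>D\<bar>"
      using H by (metis of_int_of_nat_eq)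
    ultimately show "L = real_of_int \<bar>D\<bar> * C" using H that by (simp add: L_def)
  qed
  show ?thesis unfolding Leq CC using ineq Dpos Dneg by blast
qed

end
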